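(* Let $\mathcal{A}$ be a line arrangement in $\mathbb{P}^2_{\mathbb{C}}$ with $n=|\mathcal{A}|$. If $n\le 5$, then $\mathcal{A}$ is of type $\mathcal{C}_0$ or $\mathcal{C}_1$. If $n\le 6$, then $\mathcal{A}$ is of type $\mathcal{C}_0$, $\mathcal{C}_1$ or $\mathcal{C}_2$.
   Context: $\operatorname{mult}(\mathcal{A})$ is the set of points on at least three lines of $\mathcal{A}$. $\mathcal{A}$ is of type $\mathcal{C}_k$ if $k$ is the minimal number of lines of $\mathcal{A}$ whose union contains $\operatorname{mult}(\mathcal{A})$. *)

theory Defs
  imports Complex_Main
begin

text \<open>A point of P^2
  is represented by a nonzero vector of C^3 (any nonzero multiple represents the
  same point); a line is represented by a nonzero coefficient vector (a0,a1,a2),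
  namely the line a0 x0 + a1 x1 + a2 x2 = 0.\<close>

type_synonym hvec = "complex \<times> complex \<times> complex"

definition nonzero_hv :: "hvec \<Rightarrow> bool" where
  "nonzero_hv v \<longleftrightarrow> v \<noteq> (0, 0, 0)"

definition smult_hv :: "complex \<Rightarrow> hvec \<Rightarrow> hvec" where
  "smult_hv c v = (c * fst v, c * fst (snd v), c * snd (snd v))"

definition proportional :: "hvec \<Rightarrow> hvec \<Rightarrow> bool" where
  "proportional u v \<longleftrightarrow> (\<exists>c. c \<noteq> 0 \<and> v = smult_hv c u)"

definition on_line :: "hvec \<Rightarrow> hvec \<Rightarrow> bool" where
  "on_line p a \<longleftrightarrow>
     fst a * fst p + fst (snd a) * fst (snd p) + snd (snd a) * snd (snd p) = 0"

definition line_arrangement :: "hvec set \<Rightarrow> bool" where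
  "line_arrangement A \<longleftrightarrow> finite A \<and> (\<forall>a\<in>A. nonzero_hv a) \<and>
     (\<forall>a\<in>A. \<forall>b\<in>A. a \<noteq> b \<longrightarrow> \<not> proportional a b)"

text \<open>mult(A): points lying on at least three lines of A (as a set of
  homogeneous representatives).\<close>
definition mult_pts :: "hvec set \<Rightarrow> hvec set" where
  "mult_pts A = {p. nonzero_hv p \<and> card {a\<in>A. on_line p a} \<ge> 3}"

definition covers_mult :: "hvec set \<Rightarrow> hvec set \<Rightarrow> bool" where
  "covers_mult A B \<longleftrightarrow> (\<forall>p\<in>mult_pts A. \<exists>b\<in>B. on_line p b)"

definition type_C :: "hvec set \<Rightarrow> nat \<Rightarrow> bool" where
  "type_C A k \<longleftrightarrow>
     (\<exists>B\<subseteq>A. card B = k \<and> covers_mult A B) \<and>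
     (\<forall>B\<subseteq>A. covers_mult A B \<longrightarrow> card B \<ge> k)"

end

theory Submission imports Defs begin

lemma on_line_sym: "on_line p a = on_line a p"
  by (cases p; cases a) (auto simp: on_line_def mult.commute)

lemma cross_zero:
  fixes w1 w2 w3 c1 c2 c3 :: complex
  assumes "(c1,c2,c3) \<noteq> (0,0,0)" "w2*c3 - w3*c2 = 0" "w3*c1 - w1*c3 = 0" "w1*c2 - w2*c1 = 0"
  shows "\<exists>t. w1 = t*c1 \<and> w2 = t*c2 \<and> w3 = t*c3"
proof -
  consider "c1 \<noteq> 0" | "c2 \<noteq> 0" | "c3 \<noteq> 0" using assms(1) by auto
  then show ?thesis
  proof cases
    case 1 then show ?thesis using assms
      by (intro exI[of _ "w1/c1"]) (auto simp: field_simps algebra_simps)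
  next
    case 2 then show ?thesis using assms
      by (intro exI[of _ "w2/c2"]) (auto simp: field_simps algebra_simps)
  next
    case 3 then show ?thesis using assms
      by (intro exI[of _ "w3/c3"]) (auto simp: field_simps algebra_simps)
  qed
qed

lemma two_lines:
  assumes "nonzero_hv a" "nonzero_hv b" "\<not> proportional a b" "nonzero_hv p" "nonzero_hv q"
    "on_line p a" "on_line q a" "on_line p b" "on_line q b"
  shows "proportional p q"
proof -
  obtain a1 a2 a3 where a: "a = (a1,a2,a3)" by (cases a) auto
  obtain b1 b2 b3 where b: "b = (b1,b2,b3)" by (cases b) auto
  obtain p1 p2 p3 where p: "p = (p1,p2,p3)" by (cases p) auto
  obtain q1 q2 q3 where q: "q = (q1,q2,q3)" by (cases q) auto
  define c1 where "c1 = a2*b3 - a3*b2"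
  define c2 where "c2 = a3*b1 - a1*b3"
  define c3 where "c3 = a1*b2 - a2*b1"
  have cnz: "(c1,c2,c3) \<noteq> (0,0,0)"
  proof
    assume "(c1,c2,c3) = (0,0,0)"
    then have "b2*a3 - b3*a2 = 0" "b3*a1 - b1*a3 = 0" "b1*a2 - b2*a1 = 0"
      by (auto simp: c1_def c2_def c3_def algebra_simps)
    then have "\<exists>t. b1 = t*a1 \<and> b2 = t*a2 \<and> b3 = t*a3"
      by (intro cross_zero) (use assms(1) a in \<open>auto simp: nonzero_hv_def\<close>)
    then obtain t where
      t: "b1 = t*a1" "b2 = t*a2" "b3 = t*a3" by blast
    with assms(2) b have "t \<noteq> 0" by (auto simp: nonzero_hv_def)
    with t assms(3) a b show False by (auto simp: proportional_def smult_hv_def)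
  qed
  have ep: "a1*p1+a2*p2+a3*p3 = 0" "b1*p1+b2*p2+b3*p3 = 0"
    using assms(6,8) a b p by (auto simp: on_line_def)
  have eq: "a1*q1+a2*q2+a3*q3 = 0" "b1*q1+b2*q2+b3*q3 = 0"
    using assms(7,9) a b q by (auto simp: on_line_def)
  have "p2*c3 - p3*c2 = 0" "p3*c1 - p1*c3 = 0" "p1*c2 - p2*c1 = 0"
  proof -
    have "p2*c3 - p3*c2 = a1*(b1*p1+b2*p2+b3*p3) - b1*(a1*p1+a2*p2+a3*p3)"
      by (simp add: c2_def c3_def algebra_simps)
    then show "p2*c3 - p3*c2 = 0" using ep by simp
    have "p3*c1 - p1*c3 = a2*(b1*p1+b2*p2+b3*p3) - b2*(a1*p1+a2*p2+a3*p3)"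
      by (simp add: c1_def c3_def algebra_simps)
    then show "p3*c1 - p1*c3 = 0" using ep by simp
    have "p1*c2 - p2*c1 = a3*(b1*p1+b2*p2+b3*p3) - b3*(a1*p1+a2*p2+a3*p3)"
      by (simp add: c1_def c2_def algebra_simps)
    then show "p1*c2 - p2*c1 = 0" using ep by simp
  qed
  then obtain t where t: "p1 = t*c1" "p2 = t*c2" "p3 = t*c3" using cross_zero cnz by blast
  have "q2*c3 - q3*c2 = 0" "q3*c1 - q1*c3 = 0" "q1*c2 - q2*c1 = 0"
  proof -
    have "q2*c3 - q3*c2 = a1*(b1*q1+b2*q2+b3*q3) - b1*(a1*q1+a2*q2+a3*q3)"
      by (simp add: c2_def c3_def algebra_simps)
    then show "q2*c3 - q3*c2 = 0" using eq by simp
    have "q3*c1 - q1*c3 = a2*(b1*q1+b2*q2+b3*q3) - b2*(a1*q1+a2*q2+a3*q3)"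
      by (simp add: c1_def c3_def algebra_simps)
    then show "q3*c1 - q1*c3 = 0" using eq by simp
    have "q1*c2 - q2*c1 = a3*(b1*q1+b2*q2+b3*q3) - b3*(a1*q1+a2*q2+a3*q3)"
      by (simp add: c1_def c2_def algebra_simps)
    then show "q1*c2 - q2*c1 = 0" using eq by simp
  qed
  then obtain s where s: "q1 = s*c1" "q2 = s*c2" "q3 = s*c3" using cross_zero cnz by blast
  have "t \<noteq> 0" using assms(4) p t by (auto simp: nonzero_hv_def)
  have "s \<noteq> 0" using assms(5) q s by (auto simp: nonzero_hv_def)
  show ?thesis unfolding proportional_def
    apply (rule exI[of _ "s/t"])
    using \<open>t \<noteq> 0\<close> \<open>s \<noteq> 0\<close> p q s t by (simp add: smult_hv_def)
qed

lemma share: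
  assumes "line_arrangement A" "nonzero_hv p" "nonzero_hv q" "\<not> proportional p q"
    "a \<in> A" "b \<in> A" "on_line p a" "on_line q a" "on_line p b" "on_line q b"
  shows "a = b"
proof (rule ccontr)
  assume "a \<noteq> b"
  with assms(1,5,6) have "\<not> proportional a b" "nonzero_hv a" "nonzero_hv b"
    by (auto simp: line_arrangement_def)
  from two_lines[OF this(2,3,1) assms(2,3)] assms(7-10) assms(4) show False
    by (simp add: on_line_sym)
qed

lemma prop_on: "proportional p q \<Longrightarrow> on_line p a \<Longrightarrow> on_line q a"
proof -
  assume "proportional p q" "on_line p a"
  then obtain c where "q = smult_hv c p" by (auto simp: proportional_def)
  then have "fst a * fst q + fst (snd a) * fst (snd q) + snd (snd a) * snd (snd q)
     = c * (fst a * fst p + fst (snd a) * fst (snd p) + snd (snd a) * snd (snd p))"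
    by (simp add: smult_hv_def algebra_simps)
  with \<open>on_line p a\<close> show ?thesis by (simp add: on_line_def)
qed

lemma keyK:
  assumes LA: "line_arrangement A" and p: "p \<in> mult_pts A" and q: "q \<in> mult_pts A"
    and np: "\<not> proportional p q" and nX: "\<not> (\<exists>x\<in>X. on_line q x)"
    and T: "card (A - {a\<in>A. on_line p a} - X) \<le> 2"
  shows "{a\<in>A. on_line q a} - {a\<in>A. on_line p a} = A - {a\<in>A. on_line p a} - X"
    and "card (A - {a\<in>A. on_line p a} - X) = 2"
    and "\<exists>l\<in>A. on_line p l \<and> on_line q l"
proof -
  let ?P = "{a\<in>A. on_line p a}" and ?Q = "{a\<in>A. on_line q a}" and ?T = "A - {a\<in>A. on_line p a} - X"
  have fin: "finite A" using LA by (simp add: line_arrangement_def)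
  have nzp: "nonzero_hv p" and nzq: "nonzero_hv q" using p q by (auto simp: mult_pts_def)
  have cQ: "card ?Q \<ge> 3" using q by (simp add: mult_pts_def)
  have I1: "card (?Q \<inter> ?P) \<le> 1"
    using share[OF LA nzp nzq np] fin
    by (subst One_nat_def, subst card_le_Suc0_iff_eq) auto
  have "card ?Q = card (?Q \<inter> ?P) + card (?Q - ?P)"
    using fin by (metis (no_types, lifting) card_Int_Diff finite_subset mem_Collect_eq subsetI)
  note eqc = this
  have sub: "?Q - ?P \<subseteq> ?T" using nX by auto
  have fT: "finite ?T" using fin by auto
  have m: "card (?Q - ?P) \<le> card ?T" using card_mono[OF fT sub] .
  have c2: "card (?Q - ?P) \<ge> 2" using eqc I1 cQ by linarith
  then show "card ?T = 2" using T m by linarith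
  show "?Q - ?P = ?T" using card_seteq[OF fT sub] c2 T by linarith
  have c3: "card (?Q \<inter> ?P) \<ge> 1" using eqc cQ m T by linarith
  from c3 have "?Q \<inter> ?P \<noteq> {}" by auto
  then show "\<exists>l\<in>A. on_line p l \<and> on_line q l" by auto
qed

lemma cover_gen:
  assumes LA: "line_arrangement A" and p: "p \<in> mult_pts A"
    and T: "card (A - {a\<in>A. on_line p a} - X) \<le> 2"
  shows "\<exists>l\<in>A. on_line p l \<and> (\<forall>q\<in>mult_pts A. (\<exists>x\<in>X. on_line q x) \<or> on_line q l)"
proof (cases "\<exists>q0\<in>mult_pts A. \<not> proportional p q0 \<and> \<not> (\<exists>x\<in>X. on_line q0 x)")
  case True
  then obtain q0 where q0: "q0 \<in> mult_pts A" "\<not> proportional p q0" "\<not> (\<exists>x\<in>X. on_line q0 x)"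
    by blast
  note K0 = keyK[OF LA p q0 T]
  obtain l where l: "l \<in> A" "on_line p l" "on_line q0 l" using K0(3) by blast
  show ?thesis
  proof (intro bexI[OF _ l(1)] conjI ballI l(2))
    fix q assume q: "q \<in> mult_pts A"
    show "(\<exists>x\<in>X. on_line q x) \<or> on_line q l"
    proof (cases "(\<exists>x\<in>X. on_line q x) \<or> proportional p q \<or> proportional q0 q")
      case True then show ?thesis using prop_on[of p q l] prop_on[of q0 q l] l by blast
    next
      case False
      note K = keyK[OF LA p q _ _ T]
      from K0(2)[unfolded card_2_iff] obtain a b where ab0: "A - {a\<in>A. on_line p a} - X = {a,b}" "a \<noteq> b"
        by blast
      then have ab: "a \<noteq> b" "a \<in> A - {a\<in>A. on_line p a} - X"
        "b \<in> A - {a\<in>A. on_line p a} - X" by blast+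
      have "a \<in> {a\<in>A. on_line q a}" "b \<in> {a\<in>A. on_line q a}"
        using K(1) False ab by blast+
      moreover have "a \<in> {a\<in>A. on_line q0 a}" "b \<in> {a\<in>A. on_line q0 a}"
        using K0(1) ab by blast+
      moreover have "nonzero_hv q0" "nonzero_hv q" using q0 q by (auto simp: mult_pts_def)
      ultimately have "a = b" using share[OF LA, of q0 q a b] False by auto
      with ab show ?thesis by blast
    qed
  qed
next
  case False
  have "card {a\<in>A. on_line p a} \<ge> 3" using p by (simp add: mult_pts_def)
  then have "{a\<in>A. on_line p a} \<noteq> {}" by (metis card.empty not_numeral_le_zero)
  then obtain l where l: "l \<in> A" "on_line p l" by auto
  show ?thesis
  proof (intro bexI[OF _ l(1)] conjI ballI l(2))
    fix q assume "q \<in> mult_pts A"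
    then show "(\<exists>x\<in>X. on_line q x) \<or> on_line q l"
      using False prop_on[of p q l] l(2) by blast
  qed
qed

lemma exists_type:
  assumes "B \<subseteq> A" "covers_mult A B" "card B \<le> m"
  shows "\<exists>k\<le>m. type_C A k"
proof -
  define k where "k = (LEAST k. \<exists>B\<subseteq>A. card B = k \<and> covers_mult A B)"
  have ex: "\<exists>B'\<subseteq>A. card B' = card B \<and> covers_mult A B'" using assms by blast
  have "\<exists>B\<subseteq>A. card B = k \<and> covers_mult A B"
    unfolding k_def by (rule LeastI_ex) (use ex in blast)
  moreover have "\<forall>B\<subseteq>A. covers_mult A B \<longrightarrow> card B \<ge> k"
    unfolding k_def by (auto intro: Least_le)
  moreover have "k \<le> card B" unfolding k_def by (rule Least_le) (use ex in blast)
  ultimately show ?thesis using assms(3) unfolding type_C_def by (intro exI[of _ k]) auto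
qed

theorem mainTheorem11:
  fixes A :: "hvec set"
  assumes "line_arrangement A"
  shows "(card A \<le> 5 \<longrightarrow> type_C A 0 \<or> type_C A 1) \<and>
         (card A \<le> 6 \<longrightarrow> type_C A 0 \<or> type_C A 1 \<or> type_C A 2)"
proof (cases "mult_pts A = {}")
  case True
  then have "covers_mult A {}" by (simp add: covers_mult_def)
  then obtain k where "k \<le> 0" "type_C A k" using exists_type[of "{}" A 0] by auto
  then show ?thesis by auto
next
  case False
  then obtain p where p: "p \<in> mult_pts A" by auto
  let ?P = "{a\<in>A. on_line p a}"
  have fin: "finite A" using assms by (simp add: line_arrangement_def)
  have cP: "card ?P \<ge> 3" using p by (simp add: mult_pts_def)
  have cD: "card (A - ?P) = card A - card ?P" using fin by (simp add: card_Diff_subset)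
  have five: "card A \<le> 5 \<Longrightarrow> type_C A 0 \<or> type_C A 1"
  proof -
    assume "card A \<le> 5"
    then have "card (A - ?P - {}) \<le> 2" using cD cP by simp
    from cover_gen[OF assms p this] obtain l where l: "l \<in> A" "\<forall>q\<in>mult_pts A. on_line q l"
      by auto
    then have "covers_mult A {l}" by (auto simp: covers_mult_def)
    then obtain k where "k \<le> 1" "type_C A k" using exists_type[of "{l}" A 1] l by auto
    then show ?thesis by (cases k) auto
  qed
  have six: "card A \<le> 6 \<Longrightarrow> type_C A 0 \<or> type_C A 1 \<or> type_C A 2"
  proof -
    assume c6: "card A \<le> 6"
    obtain X where X: "X \<subseteq> A" "card X \<le> 1" "card (A - ?P - X) \<le> 2"
    proof (cases "A - ?P = {}")
      case True show ?thesis 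
    proof (rule that[of "{}"])
      show "card (A - ?P - {}) \<le> 2" unfolding Diff_empty True by simp
    qed auto
    next
      case False
      then obtain x where x: "x \<in> A - ?P" by auto
      have "card (A - ?P - {x}) = card (A - ?P) - 1" using x fin by simp
      then show ?thesis using that[of "{x}"] x cD cP c6 by auto
    qed
    from cover_gen[OF assms p X(3)] obtain l where
      l: "l \<in> A" "\<forall>q\<in>mult_pts A. (\<exists>x\<in>X. on_line q x) \<or> on_line q l" by auto
    then have "covers_mult A (insert l X)" by (auto simp: covers_mult_def)
    moreover have "card (insert l X) \<le> 2"
    proof -
      have "finite X" using X(1) fin finite_subset by blast
      then have "card (insert l X) \<le> card X + 1" by (simp add: card_insert_if)
      then show ?thesis using X(2) by linarith
    qed
    ultimately obtain k where "k \<le> 2" "type_C A k" using exists_type[of "insert l X" A 2] l X(1)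
      by auto
    moreover from \<open>k \<le> 2\<close> have "k = 0 \<or> k = 1 \<or> k = 2" by arith
    ultimately show ?thesis by auto
  qed
  show ?thesis using five six by blast
qed

end
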